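(* Let $R,L,C,V_{dc},T>0$, and let $A_1,A_2,\boldsymbol{b}_1$ and the switched system be as in the context. Then the matrix $I-\mathrm{e}^{\frac{T}{2}A_2}\mathrm{e}^{\frac{T}{2}A_1}$ is invertible, and the system has a unique $T$-periodic continuous solution $\boldsymbol{x}_p$. This solution is given on one period by $$\boldsymbol{x}_p(t)=\begin{cases}\mathrm{e}^{tA_1}\boldsymbol{x}_p(0)+A_1^{-1}(\mathrm{e}^{tA_1}-I)\boldsymbol{b}_1, & t\in[0,\tfrac T2],\\[1mm] \mathrm{e}^{(t-\frac T2)A_2}\boldsymbol{x}_p(\tfrac T2), & t\in(\tfrac T2,T],\end{cases}$$ where $$\boldsymbol{x}_p(0)=\left(I-\mathrm{e}^{\frac{T}{2}A_2}\mathrm{e}^{\frac{T}{2}A_1}\right)^{-1}\mathrm{e}^{\frac{T}{2}A_2}A_1^{-1}\left(\mathrm{e}^{\frac{T}{2}A_1}-I\right)\boldsymbol{b}_1 .$$ The periodic solution is globally asymptotically stable: for every initial value $\boldsymbol{x}(0)=\boldsymbol{x}_0\in\mathbb{R}^2$, the continuous solution $\boldsymbol{x}$ satisfies $\boldsymbol{x}(t)-\boldsymbol{x}_p(t)\to 0$ as $t\to\infty$.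
   Context: Let $R,L,C,V_{dc},T>0$ be parameters. Let $\boldsymbol{x}(t)=[i(t),v(t)]^{\intercal}$ (inductor current $i$, capacitor voltage $v$). Define $$A_1=\begin{bmatrix}-\frac RL & -\frac1L\\ \frac1C & 0\end{bmatrix},\quad A_2=\begin{bmatrix}-\frac RL & \frac1L\\ -\frac1C & 0\end{bmatrix},\quad \boldsymbol{b}_1=\begin{bmatrix}\frac{V_{dc}}L\\ 0\end{bmatrix}.$$ The switched system on $t\ge 0$ is: $\boldsymbol{x}'=A_1\boldsymbol{x}+\boldsymbol{b}_1$ on each interval $[(k-1)T,(k-1)T+\frac T2]$ and $\boldsymbol{x}'=A_2\boldsymbol{x}$ on each interval $[(k-1)T+\frac T2,kT]$, $k=1,2,3,\dots$; i.e. the first system is used when $t \bmod T<T/2$ and the second otherwise. A solution is a continuous function $\boldsymbol{x}:[0,\infty)\to\mathbb{R}^2$ satisfying these equations on each interval. $\mathrm{e}^{tA}$ denotes the matrix exponential. *)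

theory Defs
  imports "HOL-Analysis.Analysis"
begin

definition mpow :: "real^'n^'n \<Rightarrow> nat \<Rightarrow> real^'n^'n" where
  "mpow A n = (((**) A) ^^ n) (mat 1)"

definition mexp :: "real^'n^'n \<Rightarrow> real^'n^'n" where
  "mexp A = (\<Sum>n. (1 / fact n) *\<^sub>R mpow A n)"

definition A1 :: "real \<Rightarrow> real \<Rightarrow> real \<Rightarrow> real^2^2" where
  "A1 R L C = vector [vector [- R / L, - 1 / L], vector [1 / C, 0]]"

definition A2 :: "real \<Rightarrow> real \<Rightarrow> real \<Rightarrow> real^2^2" where
  "A2 R L C = vector [vector [- R / L, 1 / L], vector [- 1 / C, 0]]"

definition b1 :: "real \<Rightarrow> real \<Rightarrow> real^2" where
  "b1 L Vdc = vector [Vdc / L, 0]"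

definition is_solution ::
  "real \<Rightarrow> real \<Rightarrow> real \<Rightarrow> real \<Rightarrow> real \<Rightarrow> (real \<Rightarrow> real^2) \<Rightarrow> bool" where
  "is_solution R L C Vdc T x \<longleftrightarrow>
     continuous_on {0..} x \<and>
     (\<forall>k::nat. \<forall>t \<in> {real k * T .. real k * T + T / 2}.
        (x has_vector_derivative (A1 R L C *v x t + b1 L Vdc))
          (at t within {real k * T .. real k * T + T / 2})) \<and>
     (\<forall>k::nat. \<forall>t \<in> {real k * T + T / 2 .. real (Suc k) * T}.
        (x has_vector_derivative (A2 R L C *v x t))
          (at t within {real k * T + T / 2 .. real (Suc k) * T}))"

end

theory Submission imports Defs begin


typedef (overloaded) mat2 = "UNIV :: ((real^2) \<Rightarrow>\<^sub>L (real^2)) set" by auto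
setup_lifting type_definition_mat2

instantiation mat2 :: real_normed_vector
begin
lift_definition norm_mat2 :: "mat2 \<Rightarrow> real" is norm .
lift_definition minus_mat2 :: "mat2 \<Rightarrow> mat2 \<Rightarrow> mat2" is "(-)" .
lift_definition plus_mat2 :: "mat2 \<Rightarrow> mat2 \<Rightarrow> mat2" is "(+)" .
lift_definition uminus_mat2 :: "mat2 \<Rightarrow> mat2" is uminus .
lift_definition zero_mat2 :: "mat2" is 0 .
lift_definition scaleR_mat2 :: "real \<Rightarrow> mat2 \<Rightarrow> mat2" is scaleR .
definition dist_mat2 :: "mat2 \<Rightarrow> mat2 \<Rightarrow> real" where "dist_mat2 a b = norm (a - b)"
definition uniformity_mat2 :: "(mat2 \<times> mat2) filter" where
  "uniformity_mat2 = (INF e\<in>{0 <..}. principal {(x, y). dist x y < e})"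
definition open_mat2 :: "mat2 set \<Rightarrow> bool"
  where "open_mat2 S = (\<forall>x\<in>S. \<forall>\<^sub>F (x', y) in uniformity. x' = x \<longrightarrow> y \<in> S)"
definition sgn_mat2 :: "mat2 \<Rightarrow> mat2" where "sgn_mat2 x = scaleR (inverse (norm x)) x"
instance
  apply standard
  unfolding dist_mat2_def open_mat2_def sgn_mat2_def uniformity_mat2_def
  apply (rule refl | (transfer, force simp: algebra_simps norm_triangle_ineq))+
  done
end

instantiation mat2 :: real_normed_algebra_1
begin
lift_definition times_mat2 :: "mat2 \<Rightarrow> mat2 \<Rightarrow> mat2" is "(o\<^sub>L)" .
lift_definition one_mat2 :: "mat2" is id_blinfun .
instance
proof
  fix a b c :: mat2 and r :: real
  show "a * b * c = a * (b * c)" by transfer (rule blinfun_eqI, simp)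
  show "(a + b) * c = a * c + b * c" by transfer (rule blinfun_eqI, simp add: blinfun.bilinear_simps)
  show "a * (b + c) = a * b + a * c" by transfer (rule blinfun_eqI, simp add: blinfun.bilinear_simps)
  show "r *\<^sub>R a * b = r *\<^sub>R (a * b)" by transfer (rule blinfun_eqI, simp add: blinfun.bilinear_simps)
  show "a * r *\<^sub>R b = r *\<^sub>R (a * b)" by transfer (rule blinfun_eqI, simp add: blinfun.bilinear_simps)
  show "1 * a = a" by transfer (rule blinfun_eqI, simp)
  show "a * 1 = a" by transfer (rule blinfun_eqI, simp)
  show "norm (a * b) \<le> norm a * norm b" by transfer (rule norm_blinfun_compose)
  show "norm (1::mat2) = 1" by transfer simp
  show "(0::mat2) \<noteq> 1"
    apply (simp add: zero_mat2_def one_mat2_def Abs_mat2_inject)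
    apply (rule notI)
    apply (drule arg_cong[where f="\<lambda>f. blinfun_apply f (axis 1 1)"])
    apply (simp add: axis_eq_0_iff)
    done
qed
end

instance mat2 :: banach
proof
  fix X :: "nat \<Rightarrow> mat2" assume "Cauchy X"
  then have "Cauchy (\<lambda>n. Rep_mat2 (X n))"
    unfolding Cauchy_def dist_norm by transfer simp
  then obtain l where "(\<lambda>n. Rep_mat2 (X n)) \<longlonglongrightarrow> l" using convergent_eq_Cauchy by (auto simp: convergent_def)
  then have "X \<longlonglongrightarrow> Abs_mat2 l"
    unfolding tendsto_iff dist_norm by transfer (simp add: Abs_mat2_inverse)
  then show "convergent X" by (auto simp: convergent_def)
qed


definition fromM :: "real^2^2 \<Rightarrow> mat2" where
  "fromM A = Abs_mat2 (Blinfun (\<lambda>x. A *v x))"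
definition toM :: "mat2 \<Rightarrow> real^2^2" where
  "toM B = matrix (blinfun_apply (Rep_mat2 B))"

lemma Rep_fromM: "blinfun_apply (Rep_mat2 (fromM A)) = (\<lambda>x. A *v x)"
  by (simp add: fromM_def Abs_mat2_inverse bounded_linear_Blinfun_apply)

lemma toM_fromM[simp]: "toM (fromM A) = A"
  by (simp add: toM_def Rep_fromM)

lemma fromM_toM[simp]: "fromM (toM B) = B"
proof -
  have "bounded_linear (blinfun_apply (Rep_mat2 B))" by (rule blinfun.bounded_linear_right)
  then have "(\<lambda>x. toM B *v x) = blinfun_apply (Rep_mat2 B)"
    unfolding toM_def by (rule matrix_vector_mul(3))
  then show ?thesis unfolding fromM_def
    by (simp add: blinfun_apply_inverse Rep_mat2_inverse)
qed

lemma fromM_inj: "fromM A = fromM B \<longleftrightarrow> A = B"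
  by (metis toM_fromM)

lemma fromM_mult: "fromM (A ** B) = fromM A * fromM B"
  apply (rule Rep_mat2_inject[THEN iffD1])
  apply (rule blinfun_eqI)
  apply (simp add: times_mat2.rep_eq Rep_fromM matrix_vector_mul_assoc)
  done

lemma fromM_one: "fromM (mat 1) = 1"
  apply (rule Rep_mat2_inject[THEN iffD1])
  apply (rule blinfun_eqI)
  apply (simp add: one_mat2.rep_eq Rep_fromM)
  done

lemma fromM_add: "fromM (A + B) = fromM A + fromM B"
  apply (rule Rep_mat2_inject[THEN iffD1])
  apply (rule blinfun_eqI)
  apply (simp add: plus_mat2.rep_eq Rep_fromM blinfun.bilinear_simps matrix_vector_mult_add_rdistrib)
  done

lemma fromM_scaleR: "fromM (r *\<^sub>R A) = r *\<^sub>R fromM A"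
  apply (rule Rep_mat2_inject[THEN iffD1])
  apply (rule blinfun_eqI)
  apply (simp add: scaleR_mat2.rep_eq Rep_fromM blinfun.bilinear_simps)
  apply (simp add: vec_eq_iff matrix_vector_mult_def sum_distrib_left algebra_simps)
  done

lemma toM_mult: "toM (X * Y) = toM X ** toM Y"
  by (metis fromM_mult fromM_toM toM_fromM)
lemma toM_add: "toM (X + Y) = toM X + toM Y"
  by (metis fromM_add fromM_toM toM_fromM)
lemma toM_scaleR: "toM (r *\<^sub>R X) = r *\<^sub>R toM X"
  by (metis fromM_scaleR fromM_toM toM_fromM)
lemma toM_one: "toM 1 = mat 1"
  by (metis fromM_one toM_fromM)

lemma norm_matrix_le: "norm (M::real^2^2) \<le> (\<Sum>i\<in>UNIV. \<Sum>j\<in>UNIV. \<bar>M$i$j\<bar>)"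
proof -
  have "norm M \<le> (\<Sum>i\<in>UNIV. norm (M$i))" by (simp add: norm_vec_def L2_set_le_sum)
  also have "\<dots> \<le> (\<Sum>i\<in>UNIV. \<Sum>j\<in>UNIV. \<bar>M$i$j\<bar>)"
    by (rule sum_mono) (rule norm_le_l1_cart)
  finally show ?thesis .
qed

lemma toM_entry_le: "\<bar>toM B $ i $ j\<bar> \<le> norm B"
proof -
  have "\<bar>toM B $ i $ j\<bar> = \<bar>blinfun_apply (Rep_mat2 B) (axis j 1) $ i\<bar>"
    by (simp add: toM_def matrix_def)
  also have "\<dots> \<le> norm (blinfun_apply (Rep_mat2 B) (axis j 1))" by (rule component_le_norm_cart)
  also have "\<dots> \<le> norm (Rep_mat2 B) * norm (axis j 1 :: real^2)" by (rule norm_blinfun)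
  also have "\<dots> = norm B" by (simp add: norm_mat2.rep_eq)
  finally show ?thesis .
qed

lemma bounded_linear_toM: "bounded_linear toM"
proof (rule bounded_linear_intro[where K=4])
  fix x y :: mat2 and r :: real
  show "toM (x + y) = toM x + toM y" by (rule toM_add)
  show "toM (r *\<^sub>R x) = r *\<^sub>R toM x" by (rule toM_scaleR)
  have "norm (toM x) \<le> (\<Sum>i\<in>UNIV. \<Sum>j\<in>UNIV. \<bar>toM x$i$j\<bar>)" by (rule norm_matrix_le)
  also have "\<dots> \<le> (\<Sum>i\<in>(UNIV::2 set). \<Sum>j\<in>(UNIV::2 set). norm x)"
    by (intro sum_mono toM_entry_le)
  also have "\<dots> = norm x * 4" by simp
  finally show "norm (toM x) \<le> norm x * 4" .
qed

lemma fromM_mpow: "fromM (mpow A n) = fromM A ^ n"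
  by (induction n) (simp_all add: mpow_def fromM_one fromM_mult)

lemma mexp_eq: "mexp A = toM (exp (fromM A))"
proof -
  have "toM (exp (fromM A)) = (\<Sum>n. toM (fromM A ^ n /\<^sub>R fact n))"
    unfolding exp_def by (rule bounded_linear.suminf[OF bounded_linear_toM summable_exp_generic])
  also have "\<dots> = mexp A"
    unfolding mexp_def
    by (simp add: toM_scaleR fromM_mpow[symmetric] divide_inverse_commute)
  finally show ?thesis by simp
qed

lemma fromM_zero: "fromM 0 = 0"
  by (metis fromM_scaleR scaleR_zero_left)

lemma mexp_zero: "mexp (0::real^2^2) = mat 1"
  by (simp add: mexp_eq fromM_zero toM_one)


lemma mexp_add: "mexp ((s + t) *\<^sub>R A) = mexp (s *\<^sub>R A) ** mexp (t *\<^sub>R (A::real^2^2))"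
proof -
  have "exp (s *\<^sub>R fromM A + t *\<^sub>R fromM A) = exp (s *\<^sub>R fromM A) * exp (t *\<^sub>R fromM A)"
    by (rule exp_add_commuting) (simp add: algebra_simps)
  then show ?thesis by (simp add: mexp_eq fromM_scaleR fromM_add scaleR_add_left toM_mult[symmetric])
qed

lemma mexp_commute: "A ** mexp (t *\<^sub>R A) = mexp (t *\<^sub>R A) ** (A::real^2^2)"
  by (metis exp_times_scaleR_commute fromM_scaleR mexp_eq toM_fromM toM_mult)

lemma mexp_0: "mexp (0 *\<^sub>R (A::real^2^2)) = mat 1"
  by (simp add: mexp_zero)

lemma mexp_inv: "mexp ((- t) *\<^sub>R A) ** mexp (t *\<^sub>R (A::real^2^2)) = mat 1"
  by (metis add.left_inverse mexp_add mexp_0)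

lemma mexp_inv': "mexp (t *\<^sub>R A) ** mexp ((-t) *\<^sub>R (A::real^2^2)) = mat 1"
  by (metis add.right_inverse mexp_add mexp_0)

lemma mexp_deriv: "((\<lambda>t. mexp (t *\<^sub>R A)) has_vector_derivative mexp (t *\<^sub>R A) ** (A::real^2^2)) (at t within S)"
proof -
  have "((\<lambda>t. toM (exp (t *\<^sub>R fromM A))) has_vector_derivative toM (exp (t *\<^sub>R fromM A) * fromM A)) (at t within S)"
    by (rule bounded_linear.has_vector_derivative[OF bounded_linear_toM exp_scaleR_has_vector_derivative_right])
  then show ?thesis by (simp add: mexp_eq fromM_scaleR toM_mult)
qed

lemma matrix_vector_scaleR_left: "(r *\<^sub>R (M::real^2^2)) *v v = r *\<^sub>R (M *v v)"
  by (simp add: vec_eq_iff matrix_vector_mult_def sum_distrib_left algebra_simps)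

lemma entry_le_norm: "\<bar>(M::real^2^2) $ i $ j\<bar> \<le> norm M"
  by (rule order_trans[OF component_le_norm_cart Finite_Cartesian_Product.norm_nth_le])

lemma bounded_bilinear_mv: "bounded_bilinear (\<lambda>(M::real^2^2) (v::real^2). M *v v)"
proof
  fix a a' :: "real^2^2" and b b' :: "real^2" and r :: real
  show "(a + a') *v b = a *v b + a' *v b" by (rule matrix_vector_mult_add_rdistrib)
  show "a *v (b + b') = a *v b + a *v b'" by (rule matrix_vector_right_distrib)
  show "(r *\<^sub>R a) *v b = r *\<^sub>R (a *v b)" by (rule matrix_vector_scaleR_left)
  show "a *v (r *\<^sub>R b) = r *\<^sub>R (a *v b)"
    by (simp add: vec_eq_iff matrix_vector_mult_def sum_distrib_left algebra_simps)
  show "\<exists>K. \<forall>a b. norm ((a::real^2^2) *v (b::real^2)) \<le> norm a * norm b * K"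
  proof (intro exI allI)
    fix a :: "real^2^2" and b :: "real^2"
    have "norm (a *v b) \<le> onorm ((*v) a) * norm b"
      by (rule onorm[OF matrix_vector_mul_bounded_linear])
    also have "onorm ((*v) a) \<le> (\<Sum>i\<in>UNIV. \<Sum>j\<in>UNIV. \<bar>a $ i $ j\<bar>)"
      by (rule onorm_le_matrix_component_sum)
    also have "\<dots> \<le> (\<Sum>i\<in>(UNIV::2 set). \<Sum>j\<in>(UNIV::2 set). norm a)"
      by (intro sum_mono entry_le_norm)
    finally show "norm (a *v b) \<le> norm a * norm b * 4"
      by (simp add: mult_right_mono algebra_simps)
  qed
qed

lemma mv_deriv:
  fixes x :: real and M :: "real \<Rightarrow> real^2^2" and u :: "real \<Rightarrow> real^2"
  assumes "(M has_vector_derivative M') (at x within s)"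
    and "(u has_vector_derivative u') (at x within s)"
  shows "((\<lambda>x. M x *v u x) has_vector_derivative (M x *v u' + M' *v u x)) (at x within s)"
  using bounded_bilinear.has_vector_derivative[OF bounded_bilinear_mv assms] by simp

lemma mexp_vderiv: "((\<lambda>t. mexp (t *\<^sub>R A) *v x) has_vector_derivative (mexp (t *\<^sub>R A) ** (A::real^2^2)) *v x) (at t within S)"
  using mv_deriv[OF mexp_deriv[of A t S] has_vector_derivative_const[of x]] by simp

lemma ode_unique:
  fixes A :: "real^2^2" and u :: "real \<Rightarrow> real^2"
  assumes "\<forall>t\<in>{a..b}. (u has_vector_derivative A *v u t) (at t within {a..b})"
  shows "\<forall>t\<in>{a..b}. u t = mexp ((t - a) *\<^sub>R A) *v u a"
proof -
  define w where "w t = mexp ((a - t) *\<^sub>R A) *v u t" for t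
  have "(w has_derivative (\<lambda>h. 0)) (at t within {a..b})" if t: "t \<in> {a..b}" for t
  proof -
    have d1: "((\<lambda>t. a - t) has_vector_derivative -1) (at t within {a..b})"
      by (auto intro!: derivative_eq_intros)
    have "((\<lambda>t. mexp (t *\<^sub>R A)) \<circ> (\<lambda>t. a - t) has_vector_derivative (-1) *\<^sub>R (mexp ((a - t) *\<^sub>R A) ** A)) (at t within {a..b})"
      by (rule vector_diff_chain_within[OF d1 mexp_deriv])
    then have d2: "((\<lambda>t. mexp ((a - t) *\<^sub>R A)) has_vector_derivative - (mexp ((a - t) *\<^sub>R A) ** A)) (at t within {a..b})"
      by (simp add: o_def)
    have "(w has_vector_derivative (mexp ((a - t) *\<^sub>R A) *v (A *v u t) + (- (mexp ((a - t) *\<^sub>R A) ** A)) *v u t)) (at t within {a..b})"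
      unfolding w_def by (rule mv_deriv[OF d2 assms[rule_format, OF t]])
    also have "mexp ((a - t) *\<^sub>R A) *v (A *v u t) + (- (mexp ((a - t) *\<^sub>R A) ** A)) *v u t = 0"
      by (simp add: matrix_vector_mul_assoc matrix_vector_scaleR_left[of "-1", simplified])
    finally show ?thesis by (simp add: has_vector_derivative_def)
  qed
  then obtain c where c: "\<forall>t\<in>{a..b}. w t = c"
    using has_derivative_zero_constant[of "{a..b}" w] by auto
  show ?thesis
  proof
    fix t assume t: "t \<in> {a..b}"
    then have "a \<in> {a..b}" by auto
    with c t have "w t = w a" by simp
    then have "mexp ((t - a) *\<^sub>R A) *v w t = mexp ((t - a) *\<^sub>R A) *v u a"
      by (simp add: w_def mexp_zero)
    moreover have "mexp ((t - a) *\<^sub>R A) *v w t = u t"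
      using mexp_inv'[of "t - a" A] by (simp add: w_def matrix_vector_mul_assoc)
    ultimately show "u t = mexp ((t - a) *\<^sub>R A) *v u a" by simp
  qed
qed


lemma A1_apply: "(A1 R L C *v w) $ 1 = - R / L * w$1 - w$2 / L" "(A1 R L C *v w) $ 2 = w$1 / C"
  by (simp_all add: A1_def matrix_vector_mult_def sum_2 vector_2)

lemma A2_apply: "(A2 R L C *v w) $ 1 = - R / L * w$1 + w$2 / L" "(A2 R L C *v w) $ 2 = - w$1 / C"
  by (simp_all add: A2_def matrix_vector_mult_def sum_2 vector_2)

lemma b1_apply: "b1 L V $ 1 = V / L" "b1 L V $ 2 = 0"
  by (simp_all add: b1_def vector_2)

lemma det_A1: "det (A1 R L C) = 1 / (L * C)"
  by (simp add: A1_def det_2 vector_2)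


definition En :: "real \<Rightarrow> real \<Rightarrow> real^2 \<Rightarrow> real" where
  "En L C w = L * (w$1)^2 + C * (w$2)^2"

lemma flow_deriv:
  fixes A :: "real^2^2" and z :: "real^2" and s :: real
  shows "((\<lambda>s. mexp (s *\<^sub>R A) *v z) has_vector_derivative A *v (mexp (s *\<^sub>R A) *v z)) (at s within S)"
  using mexp_vderiv[where A=A and x=z and t=s and S=S] by (simp add: mexp_commute[symmetric] matrix_vector_mul_assoc)

lemma comp_deriv:
  fixes A :: "real^2^2" and z :: "real^2" and s :: real
  shows "((\<lambda>s. (mexp (s *\<^sub>R A) *v z) $ i) has_real_derivative (A *v (mexp (s *\<^sub>R A) *v z)) $ i) (at s within S)"
  using bounded_linear.has_vector_derivative[OF bounded_linear_vec_nth[of i] flow_deriv[where A=A and z=z and s=s and S=S]]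
  by (simp add: has_real_derivative_iff_has_vector_derivative)

locale energy =
  fixes L C R :: real and A :: "real^2^2"
  assumes pos: "L > 0" "C > 0" "R > 0"
  and H1: "\<And>w. L * (w$1) * (A *v w)$1 + C * (w$2) * (A *v w)$2 = - R * (w$1)^2"
  and H2: "\<And>w. w$1 = 0 \<Longrightarrow> (A *v w)$1 = 0 \<Longrightarrow> w = 0"
begin

lemma En_deriv: "((\<lambda>s. En L C (mexp (s *\<^sub>R A) *v z)) has_real_derivative - 2 * R * ((mexp (s *\<^sub>R A) *v z)$1)^2) (at s)"
proof -
  let ?u = "mexp (s *\<^sub>R A) *v z"
  have "((\<lambda>s. En L C (mexp (s *\<^sub>R A) *v z)) has_real_derivative
     L * (2 * ?u$1 * (A *v ?u)$1) + C * (2 * ?u$2 * (A *v ?u)$2)) (at s)"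
  proof -
    have d1: "((\<lambda>s. (mexp (s *\<^sub>R A) *v z) $ 1) has_real_derivative (A *v ?u) $ 1) (at s)"
      by (rule comp_deriv)
    have d2: "((\<lambda>s. (mexp (s *\<^sub>R A) *v z) $ 2) has_real_derivative (A *v ?u) $ 2) (at s)"
      by (rule comp_deriv)
    show ?thesis
      unfolding En_def
      using DERIV_add[OF DERIV_cmult[OF DERIV_power[OF d1, of 2], of L] DERIV_cmult[OF DERIV_power[OF d2, of 2], of C]]
      by (simp add: algebra_simps)
  qed
  also have "L * (2 * ?u$1 * (A *v ?u)$1) + C * (2 * ?u$2 * (A *v ?u)$2) = - 2 * R * (?u$1)^2"
    using H1[of ?u] by (simp add: algebra_simps)
  finally show ?thesis .
qed

lemma En_mono: assumes "s \<le> s'"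
  shows "En L C (mexp (s' *\<^sub>R A) *v z) \<le> En L C (mexp (s *\<^sub>R A) *v z)"
proof -
  have cont: "continuous_on {s..s'} (\<lambda>s. En L C (mexp (s *\<^sub>R A) *v z))"
    by (rule continuous_at_imp_continuous_on) (blast intro: DERIV_isCont En_deriv)
  show ?thesis
    by (rule DERIV_nonpos_imp_decreasing_open[OF assms _ cont])
       (use pos in \<open>auto intro!: exI En_deriv\<close>)
qed

lemma En_le: "0 \<le> s \<Longrightarrow> En L C (mexp (s *\<^sub>R A) *v z) \<le> En L C z"
  using En_mono[of 0 s z] by (simp add: mexp_zero)

lemma En_strict:
  assumes h: "0 < h" and z: "z \<noteq> 0"
  shows "En L C (mexp (h *\<^sub>R A) *v z) < En L C z"
proof (rule ccontr)
  define e where "e s = En L C (mexp (s *\<^sub>R A) *v z)" for s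
  define u where "u s = mexp (s *\<^sub>R A) *v z" for s
  assume "\<not> ?thesis"
  then have eh: "e h \<ge> e 0" by (simp add: e_def mexp_zero)
  have const: "e s = e 0" if "s \<in> {0<..<h}" for s
  proof -
    have a: "e s \<le> e 0" using En_mono[of 0 s z] that unfolding e_def by auto
    have b: "e h \<le> e s" using En_mono[of s h z] that unfolding e_def by auto
    show ?thesis using a b eh by simp
  qed
  let ?s = "h / 2"
  have s: "?s \<in> {0<..<h}" using h by auto
  have u1: "u s $ 1 = 0" if "s \<in> {0<..<h}" for s
  proof -
    have "((\<lambda>_. e 0) has_real_derivative 0) (at s)" by simp
    then have "(e has_real_derivative 0) (at s)"
      by (rule has_field_derivative_transform_within_open[OF _ open_greaterThanLessThan that])
         (simp add: const)
    moreover have "(e has_real_derivative - 2 * R * (u s $1)^2) (at s)"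
      unfolding e_def u_def by (rule En_deriv)
    ultimately have "- 2 * R * (u s $1)^2 = 0" using DERIV_unique by blast
    with pos show ?thesis by simp
  qed
  have "((\<lambda>s. u s $ 1) has_real_derivative 0) (at ?s)"
    by (rule has_field_derivative_transform_within_open[OF _ open_greaterThanLessThan s])
       (auto simp: u1)
  moreover have "((\<lambda>s. u s $ 1) has_real_derivative (A *v u ?s) $ 1) (at ?s)"
    unfolding u_def by (rule comp_deriv)
  ultimately have "(A *v u ?s) $ 1 = 0" using DERIV_unique by blast
  with u1[OF s] have "u ?s = 0" by (rule H2)
  then have "mexp ((- ?s) *\<^sub>R A) *v u ?s = 0" by simp
  then have "z = 0" using mexp_inv[of ?s A] by (simp add: u_def matrix_vector_mul_assoc)
  with z show False by simp
qed

end




lemma matrix_inv_props: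
  fixes A :: "real^'n^'n"
  assumes "invertible A"
  shows "A ** matrix_inv A = mat 1" "matrix_inv A ** A = mat 1"
  using someI_ex[OF assms[unfolded invertible_def]] unfolding matrix_inv_def by auto

lemma vec2_eqI: "(x::real^2)$1 = y$1 \<Longrightarrow> x$2 = y$2 \<Longrightarrow> x = y"
  by (simp add: vec_eq_iff forall_2)

lemma norm_vec2_sq: "(norm (x::real^2))^2 = (x$1)^2 + (x$2)^2"
  unfolding power2_norm_eq_inner by (simp add: inner_vec_def sum_2 power2_eq_square)

lemma energy_A1: "L > 0 \<Longrightarrow> C > 0 \<Longrightarrow> R > 0 \<Longrightarrow> energy L C R (A1 R L C)"
  by unfold_locales (auto simp: A1_apply field_simps power2_eq_square intro: vec2_eqI)

lemma energy_A2: "L > 0 \<Longrightarrow> C > 0 \<Longrightarrow> R > 0 \<Longrightarrow> energy L C R (A2 R L C)"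
  by unfold_locales (auto simp: A2_apply field_simps power2_eq_square intro: vec2_eqI)

lemma mexp_shift: "mexp ((t - c) *\<^sub>R M) *v x = mexp (t *\<^sub>R M) *v (mexp ((-c) *\<^sub>R (M::real^2^2)) *v x)"
  using mexp_add[of t "-c" M] by (simp add: matrix_vector_mul_assoc)


locale sys =
  fixes R L C Vdc T :: real
  assumes pos: "R > 0" "L > 0" "C > 0" "Vdc > 0" "T > 0"
begin

abbreviation "M1 \<equiv> A1 R L C"
abbreviation "M2 \<equiv> A2 R L C"
abbreviation "bb \<equiv> b1 L Vdc"
abbreviation "Ai \<equiv> matrix_inv M1"

definition "wv = Ai *v bb"
definition "F1 s a = mexp (s *\<^sub>R M1) *v a + (Ai ** (mexp (s *\<^sub>R M1) - mat 1)) *v bb"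
definition "F2 s c = mexp (s *\<^sub>R M2) *v c"
definition "G a = F2 (T/2) (F1 (T/2) a)"
definition "PP = mexp ((T/2) *\<^sub>R M2) ** mexp ((T/2) *\<^sub>R M1)"
definition "sol a t = (let k = nat \<lfloor>t / T\<rfloor>; s = t - real k * T in
   if s \<le> T/2 then F1 s ((G^^k) a) else F2 (s - T/2) (F1 (T/2) ((G^^k) a)))"

lemma e1: "energy L C R M1" using energy_A1 pos by auto
lemma e2: "energy L C R M2" using energy_A2 pos by auto

lemma inv1: "M1 ** Ai = mat 1" "Ai ** M1 = mat 1"
proof -
  have "invertible M1" using pos by (simp add: invertible_det_nz det_A1)
  then show "M1 ** Ai = mat 1" "Ai ** M1 = mat 1" by (rule matrix_inv_props)+
qed

lemma M1_wv: "M1 *v wv = bb"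
  by (simp add: wv_def matrix_vector_mul_assoc inv1)

lemma Ai_comm: "Ai ** mexp (s *\<^sub>R M1) = mexp (s *\<^sub>R M1) ** Ai"
proof -
  let ?E = "mexp (s *\<^sub>R M1)"
  have "Ai ** ?E = Ai ** ?E ** (M1 ** Ai)" by (simp add: inv1)
  also have "\<dots> = Ai ** (M1 ** ?E) ** Ai" by (simp add: matrix_mul_assoc mexp_commute)
  also have "\<dots> = ?E ** Ai" by (simp add: matrix_mul_assoc inv1)
  finally show ?thesis .
qed

lemma F1_alt: "F1 s a = mexp (s *\<^sub>R M1) *v (a + wv) - wv"
proof -
  have "(Ai ** (mexp (s *\<^sub>R M1) - mat 1)) *v bb = (Ai ** mexp (s *\<^sub>R M1)) *v bb - wv"
    by (simp add: wv_def matrix_vector_mul_assoc[symmetric] matrix_vector_mult_diff_rdistrib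
        matrix_vector_mult_diff_distrib)
  also have "\<dots> = mexp (s *\<^sub>R M1) *v wv - wv"
    by (simp add: Ai_comm wv_def matrix_vector_mul_assoc)
  finally show ?thesis by (simp add: F1_def matrix_vector_right_distrib)
qed

lemma F1_0: "F1 0 a = a" by (simp add: F1_alt mexp_zero)
lemma F2_0: "F2 0 a = a" by (simp add: F2_def mexp_zero)

lemma F1_diff: "F1 s a - F1 s b = mexp (s *\<^sub>R M1) *v (a - b)"
  by (simp add: F1_alt matrix_vector_mult_diff_distrib matrix_vector_right_distrib)

lemma F2_diff: "F2 s a - F2 s b = mexp (s *\<^sub>R M2) *v (a - b)"
  by (simp add: F2_def matrix_vector_mult_diff_distrib)

lemma G_diff: "G a - G b = PP *v (a - b)"
  by (simp add: G_def F2_diff F1_diff PP_def matrix_vector_mul_assoc)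

lemma deriv1: "((\<lambda>t. F1 (t - c) a) has_vector_derivative M1 *v F1 (t - c) a + bb) (at t within S)"
proof -
  let ?v = "mexp ((-c) *\<^sub>R M1) *v (a + wv)"
  have eq: "(\<lambda>t. F1 (t - c) a) = (\<lambda>t. mexp (t *\<^sub>R M1) *v ?v - wv)"
    by (simp add: F1_alt mexp_shift)
  have "((\<lambda>t. mexp (t *\<^sub>R M1) *v ?v - wv) has_vector_derivative M1 *v (mexp (t *\<^sub>R M1) *v ?v) - 0) (at t within S)"
    by (intro has_vector_derivative_diff flow_deriv has_vector_derivative_const)
  also have "M1 *v (mexp (t *\<^sub>R M1) *v ?v) - 0 = M1 *v F1 (t - c) a + bb"
    by (simp add: F1_alt mexp_shift matrix_vector_mult_diff_distrib M1_wv)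
  finally show ?thesis unfolding eq .
qed

lemma deriv2: "((\<lambda>t. F2 (t - c) a) has_vector_derivative M2 *v F2 (t - c) a) (at t within S)"
proof -
  let ?v = "mexp ((-c) *\<^sub>R M2) *v a"
  have eq: "(\<lambda>t. F2 (t - c) a) = (\<lambda>t. mexp (t *\<^sub>R M2) *v ?v)"
    by (simp add: F2_def mexp_shift)
  have "((\<lambda>t. mexp (t *\<^sub>R M2) *v ?v) has_vector_derivative M2 *v (mexp (t *\<^sub>R M2) *v ?v)) (at t within S)"
    by (rule flow_deriv)
  then show ?thesis unfolding eq by (simp add: F2_def mexp_shift)
qed

lemma floor_k:
  assumes "real k * T \<le> t" "t < real (Suc k) * T"
  shows "nat \<lfloor>t / T\<rfloor> = k"
proof -
  have "real k \<le> t / T" "t / T < real k + 1"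
    using assms pos by (auto simp: field_simps)
  then have "\<lfloor>t / T\<rfloor> = int k" by (simp add: floor_eq_iff)
  then show ?thesis by simp
qed

lemma sol_p1:
  assumes "t \<in> {real k * T .. real k * T + T/2}"
  shows "sol a t = F1 (t - real k * T) ((G^^k) a)"
proof -
  have "nat \<lfloor>t / T\<rfloor> = k" using assms pos by (intro floor_k) (auto simp: field_simps)
  then show ?thesis using assms by (simp add: sol_def Let_def)
qed

lemma sol_p2:
  assumes "t \<in> {real k * T + T/2 .. real (Suc k) * T}"
  shows "sol a t = F2 (t - real k * T - T/2) (F1 (T/2) ((G^^k) a))"
proof (cases "t < real (Suc k) * T")
  case True
  then have k: "nat \<lfloor>t / T\<rfloor> = k" using assms pos by (intro floor_k) (auto simp: field_simps)
  show ?thesis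
  proof (cases "t - real k * T \<le> T/2")
    case True
    then have e: "t - real k * T = T/2" using assms by auto
    show ?thesis using k by (simp add: sol_def Let_def e F2_0)
  next
    case False
    then show ?thesis using k by (simp add: sol_def Let_def)
  qed
next
  case False
  then have t: "t = real (Suc k) * T" using assms by auto
  have "nat \<lfloor>t / T\<rfloor> = Suc k" using pos t by (intro floor_k) (auto simp: field_simps)
  then have "sol a t = F1 0 ((G^^(Suc k)) a)" using t pos by (simp add: sol_def Let_def)
  also have "\<dots> = F2 (T/2) (F1 (T/2) ((G^^k) a))" by (simp add: F1_0 G_def)
  finally have s1: "sol a t = F2 (T/2) (F1 (T/2) ((G^^k) a))" .
  have e: "t - real k * T - T/2 = T/2" using t by (simp add: algebra_simps)
  show ?thesis by (simp only: s1 e)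
qed

lemma sol_d1:
  assumes "t \<in> {real k * T .. real k * T + T/2}"
  shows "(sol a has_vector_derivative M1 *v sol a t + bb) (at t within {real k * T .. real k * T + T/2})"
proof -
  have "((\<lambda>t. F1 (t - real k * T) ((G^^k) a)) has_vector_derivative
          M1 *v F1 (t - real k * T) ((G^^k) a) + bb) (at t within {real k * T .. real k * T + T/2})"
    by (rule deriv1)
  then have D: "((\<lambda>t. F1 (t - real k * T) ((G^^k) a)) has_vector_derivative
          M1 *v sol a t + bb) (at t within {real k * T .. real k * T + T/2})"
    using sol_p1[OF assms] by simp
  have E: "\<And>x. x \<in> {real k * T .. real k * T + T/2} \<Longrightarrow> sol a x = F1 (x - real k * T) ((G^^k) a)"
    by (rule sol_p1)
  show ?thesis by (rule has_vector_derivative_transform[OF assms E D])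
qed

lemma sol_d2:
  assumes "t \<in> {real k * T + T/2 .. real (Suc k) * T}"
  shows "(sol a has_vector_derivative M2 *v sol a t) (at t within {real k * T + T/2 .. real (Suc k) * T})"
proof -
  have eq: "\<And>t. t - real k * T - T/2 = t - (real k * T + T/2)" by simp
  have "((\<lambda>t. F2 (t - (real k * T + T/2)) (F1 (T/2) ((G^^k) a))) has_vector_derivative
          M2 *v F2 (t - (real k * T + T/2)) (F1 (T/2) ((G^^k) a))) (at t within {real k * T + T/2 .. real (Suc k) * T})"
    by (rule deriv2)
  then have D: "((\<lambda>t. F2 (t - (real k * T + T/2)) (F1 (T/2) ((G^^k) a))) has_vector_derivative
          M2 *v sol a t) (at t within {real k * T + T/2 .. real (Suc k) * T})"
    using sol_p2[OF assms] by (simp only: eq)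
  have E: "\<And>x. x \<in> {real k * T + T/2 .. real (Suc k) * T} \<Longrightarrow> sol a x = F2 (x - (real k * T + T/2)) (F1 (T/2) ((G^^k) a))"
    by (simp only: sol_p2 eq[symmetric])
  show ?thesis by (rule has_vector_derivative_transform[OF assms E D])
qed

lemma sol_cont_pieces:
  "continuous_on {real k * T .. real k * T + T/2} (sol a)"
  "continuous_on {real k * T + T/2 .. real (Suc k) * T} (sol a)"
  unfolding continuous_on_eq_continuous_within
  by (rule ballI, rule has_vector_derivative_continuous[OF sol_d1], assumption)
     (rule ballI, rule has_vector_derivative_continuous[OF sol_d2], assumption)

lemma sol_cont_n: "continuous_on {0 .. real n * T} (sol a)"
proof (induction n)
  case 0
  then show ?case by simp
next
  case (Suc n)
  have h: "\<And>x. T * real n \<le> x \<Longrightarrow> 0 \<le> x" using pos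
    by (meson mult_nonneg_nonneg of_nat_0_le_iff order_trans less_imp_le)
  have h2: "0 \<le> x" if "T * real n + T/2 \<le> x" for x using that pos h[OF order_refl] by linarith
  have "{0 .. real (Suc n) * T} = {0 .. real n * T} \<union> ({real n * T .. real n * T + T/2} \<union> {real n * T + T/2 .. real (Suc n) * T})"
    using pos by (auto simp: algebra_simps intro: h h2)
  also have "continuous_on \<dots> (sol a)"
    by (intro continuous_on_closed_Un Suc sol_cont_pieces closed_Un closed_atLeastAtMost)
  finally show ?case .
qed

lemma sol_cont: "continuous_on {0..} (sol a)"
proof -
  have "continuous (at t within {0..}) (sol a)" if t: "t \<ge> 0" for t
  proof -
    obtain n :: nat where n: "t / T < real n" using reals_Archimedean2 by blast
    then have tn: "t < real n * T" using pos by (simp add: field_simps)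
    have "continuous (at t within {0 .. real n * T}) (sol a)"
      using sol_cont_n[of n a] t tn by (simp add: continuous_on_eq_continuous_within)
    moreover have "at t within {0..} = at t within {0 .. real n * T}"
      by (rule at_within_nhd[where S="{..< real n * T}"]) (use t tn in auto)
    ultimately show ?thesis by simp
  qed
  then show ?thesis by (simp add: continuous_on_eq_continuous_within)
qed

lemma sol_solution: "is_solution R L C Vdc T (sol a)"
  unfolding is_solution_def using sol_cont sol_d1 sol_d2 by blast

lemma sol_0: "sol a 0 = a"
  using sol_p1[of 0 0 a] pos by (simp add: F1_0)

lemma sol_shift:
  assumes "t \<ge> 0" shows "sol a (t + T) = sol (G a) t"
proof -
  have "(t + T) / T = t / T + 1" using pos by (simp add: field_simps)
  then have fl: "\<lfloor>(t + T) / T\<rfloor> = \<lfloor>t / T\<rfloor> + 1" by simp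
  have h0: "\<lfloor>t / T\<rfloor> \<ge> 0" using assms pos by simp
  have k: "nat \<lfloor>(t + T) / T\<rfloor> = Suc (nat \<lfloor>t / T\<rfloor>)" unfolding fl
    by (metis h0 Suc_nat_eq_nat_zadd1 add.commute)
  have s: "t + T - real (Suc (nat \<lfloor>t / T\<rfloor>)) * T = t - real (nat \<lfloor>t / T\<rfloor>) * T"
    by (simp add: algebra_simps)
  show ?thesis
    unfolding sol_def Let_def k s by (simp add: funpow_Suc_right del: funpow.simps)
qed


lemma floor_bounds:
  assumes "t \<ge> 0"
  shows "real (nat \<lfloor>t / T\<rfloor>) * T \<le> t" "t < real (Suc (nat \<lfloor>t / T\<rfloor>)) * T"
proof -
  have h0: "\<lfloor>t / T\<rfloor> \<ge> 0" using assms pos by simp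
  then have r: "real (nat \<lfloor>t / T\<rfloor>) = of_int \<lfloor>t / T\<rfloor>" by simp
  have f1: "of_int \<lfloor>t / T\<rfloor> \<le> t / T" and f2: "t / T < of_int \<lfloor>t / T\<rfloor> + 1" by linarith+
  have "of_int \<lfloor>t / T\<rfloor> * T \<le> t" using f1 pos by (simp add: le_divide_eq)
  moreover have "t < (of_int \<lfloor>t / T\<rfloor> + 1) * T" by (metis f2 pos(5) pos_divide_less_eq)
  ultimately show "real (nat \<lfloor>t / T\<rfloor>) * T \<le> t" "t < real (Suc (nat \<lfloor>t / T\<rfloor>)) * T"
    unfolding r by (simp_all add: algebra_simps r)
qed

lemma sol_unique:
  assumes x: "is_solution R L C Vdc T x"
  shows "\<forall>t\<ge>0. x t = sol (x 0) t"
proof -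
  have D1: "\<And>k t. t \<in> {real k * T .. real k * T + T / 2} \<Longrightarrow>
        (x has_vector_derivative (M1 *v x t + bb)) (at t within {real k * T .. real k * T + T / 2})"
   and D2: "\<And>k t. t \<in> {real k * T + T / 2 .. real (Suc k) * T} \<Longrightarrow>
        (x has_vector_derivative (M2 *v x t)) (at t within {real k * T + T / 2 .. real (Suc k) * T})"
    using x unfolding is_solution_def by blast+
  have P1: "x t = F1 (t - real k * T) (x (real k * T))" if t: "t \<in> {real k * T .. real k * T + T / 2}" for k t
  proof -
    have "\<forall>t\<in>{real k * T .. real k * T + T / 2}.
       ((\<lambda>t. x t + wv) has_vector_derivative M1 *v (x t + wv)) (at t within {real k * T .. real k * T + T / 2})"
    proof
      fix t assume "t \<in> {real k * T .. real k * T + T / 2}"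
      from has_vector_derivative_add[OF D1[OF this] has_vector_derivative_const[of wv]]
      show "((\<lambda>t. x t + wv) has_vector_derivative M1 *v (x t + wv)) (at t within {real k * T .. real k * T + T / 2})"
        by (simp add: matrix_vector_right_distrib M1_wv)
    qed
    from ode_unique[OF this] t
    have "x t + wv = mexp ((t - real k * T) *\<^sub>R M1) *v (x (real k * T) + wv)" by blast
    then show ?thesis by (simp add: F1_alt algebra_simps)
  qed
  have P2: "x t = F2 (t - (real k * T + T/2)) (x (real k * T + T/2))" if t: "t \<in> {real k * T + T / 2 .. real (Suc k) * T}" for k t
  proof -
    from ode_unique[OF ballI[OF D2]] t show ?thesis unfolding F2_def by blast
  qed
  have N: "x (real k * T) = (G^^k) (x 0)" for k
  proof (induction k)
    case 0 then show ?case by simp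
  next
    case (Suc k)
    have a: "real (Suc k) * T \<in> {real k * T + T / 2 .. real (Suc k) * T}" using pos by (auto simp: algebra_simps)
    have b: "real k * T + T/2 \<in> {real k * T .. real k * T + T / 2}" using pos by auto
    have e: "real (Suc k) * T - (real k * T + T/2) = T/2" by (simp add: algebra_simps)
    have "x (real (Suc k) * T) = F2 (T/2) (x (real k * T + T/2))" using P2[OF a] unfolding e .
    also have "x (real k * T + T/2) = F1 (T/2) (x (real k * T))" using P1[OF b] by simp
    finally show ?case using Suc by (simp add: G_def)
  qed
  show ?thesis
  proof (intro allI impI)
    fix t :: real assume t: "t \<ge> 0"
    define k where "k = nat \<lfloor>t / T\<rfloor>"
    have kb: "real k * T \<le> t" "t < real (Suc k) * T" using floor_bounds[OF t] unfolding k_def by auto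
    show "x t = sol (x 0) t"
    proof (cases "t \<le> real k * T + T/2")
      case True
      then have tt: "t \<in> {real k * T .. real k * T + T / 2}" using kb by auto
      show ?thesis using P1[OF tt] sol_p1[OF tt] N by simp
    next
      case False
      then have tt: "t \<in> {real k * T + T/2 .. real (Suc k) * T}" using kb by auto
      have b: "real k * T + T/2 \<in> {real k * T .. real k * T + T / 2}" using pos by auto
      show ?thesis using P2[OF tt] sol_p2[OF tt] P1[OF b] N by (simp add: algebra_simps)
    qed
  qed
qed

lemma PP_strict: "z \<noteq> 0 \<Longrightarrow> En L C (PP *v z) < En L C z"
proof -
  assume z: "z \<noteq> 0"
  have "En L C (PP *v z) = En L C (mexp ((T/2) *\<^sub>R M2) *v (mexp ((T/2) *\<^sub>R M1) *v z))"
    by (simp add: PP_def matrix_vector_mul_assoc)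
  also have "\<dots> \<le> En L C (mexp ((T/2) *\<^sub>R M1) *v z)"
    using energy.En_le[OF e2] pos by simp
  also have "\<dots> < En L C z"
    using energy.En_strict[OF e1] pos z by simp
  finally show ?thesis .
qed

lemma PP_le: "En L C (PP *v z) \<le> En L C z"
  using PP_strict[of z] by (cases "z = 0") (auto simp: En_def)

lemma En_nonneg: "0 \<le> En L C z"
  using pos by (simp add: En_def)

lemma En_pos: "z \<noteq> 0 \<Longrightarrow> 0 < En L C z"
  using pos by (auto simp: En_def vec_eq_iff forall_2 add_pos_nonneg add_nonneg_pos)

lemma En_scale: "En L C (c *\<^sub>R z) = c^2 * En L C z"
  by (simp add: En_def algebra_simps power_mult_distrib)

lemma En_lower: "min L C * (norm z)^2 \<le> En L C z"
proof -
  have "min L C * (norm z)^2 = min L C * (z$1)^2 + min L C * (z$2)^2"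
    by (simp add: norm_vec2_sq algebra_simps)
  also have "\<dots> \<le> L * (z$1)^2 + C * (z$2)^2"
    by (intro add_mono mult_right_mono) auto
  finally show ?thesis by (simp add: En_def)
qed

lemma cont_En: "continuous_on S (\<lambda>z. En L C (f z))" if "continuous_on S f" for f :: "real^2 \<Rightarrow> real^2" and S
proof -
  have c: "continuous_on S (\<lambda>z. f z $ i)" for i
    by (rule bounded_linear.continuous_on[OF bounded_linear_vec_nth that])
  show ?thesis unfolding En_def by (intro continuous_intros c)
qed

lemma q_exists: "\<exists>q. 0 \<le> q \<and> q < 1 \<and> (\<forall>z. En L C (PP *v z) \<le> q * En L C z)"
proof -
  let ?S = "sphere (0::real^2) 1"
  let ?f = "\<lambda>z. En L C (PP *v z) / En L C z"
  have "norm (axis 1 1 :: real^2) = 1" by (rule norm_axis_1)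
  then have "(axis 1 1 :: real^2) \<in> ?S" by (simp add: dist_norm)
  then have ne: "?S \<noteq> {}" by blast
  have "continuous_on ?S ?f"
    by (intro continuous_on_divide cont_En continuous_on_id matrix_vector_mult_linear_continuous_on)
       (metis En_pos less_irrefl mem_sphere_0 norm_zero zero_neq_one)
  then obtain z0 where z0: "z0 \<in> ?S" and mx: "\<forall>y\<in>?S. ?f y \<le> ?f z0"
    using continuous_attains_sup[OF compact_sphere ne] by blast
  have z0ne: "z0 \<noteq> 0" using z0 by auto
  define q where "q = ?f z0"
  have q1: "q < 1" using PP_strict[OF z0ne] En_pos[OF z0ne] by (simp add: q_def)
  have q0: "0 \<le> q" using En_nonneg by (simp add: q_def)
  have "En L C (PP *v z) \<le> q * En L C z" for z
  proof (cases "z = 0")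
    case True then show ?thesis by (simp add: En_def)
  next
    case False
    define w where "w = z /\<^sub>R norm z"
    have w: "w \<in> ?S" using False by (simp add: w_def)
    have zw: "z = norm z *\<^sub>R w" using False by (simp add: w_def)
    have wne: "w \<noteq> 0" using w by auto
    have "?f w \<le> q" using mx w by (simp add: q_def)
    then have "En L C (PP *v w) \<le> q * En L C w" using En_pos[OF wne] by (simp add: divide_le_eq)
    then have "(norm z)^2 * En L C (PP *v w) \<le> (norm z)^2 * (q * En L C w)"
      by (intro mult_left_mono) auto
    then show ?thesis
      by (subst (1 2) zw) (simp add: matrix_vector_mult_scaleR En_scale algebra_simps)
  qed
  with q0 q1 show ?thesis by blast
qed

lemma Gk_diff:
  assumes hq: "\<forall>z. En L C (PP *v z) \<le> q * En L C z" and q0: "0 \<le> q"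
  shows "En L C ((G^^k) a - (G^^k) b) \<le> q^k * En L C (a - b)"
proof (induction k)
  case 0 then show ?case by simp
next
  case (Suc k)
  have "En L C ((G^^Suc k) a - (G^^Suc k) b) = En L C (PP *v ((G^^k) a - (G^^k) b))"
    by (simp only: funpow.simps o_apply G_diff)
  also have "\<dots> \<le> q * En L C ((G^^k) a - (G^^k) b)" using hq by blast
  also have "\<dots> \<le> q * (q^k * En L C (a - b))" using Suc q0 by (intro mult_left_mono)
  finally show ?case by simp
qed
lemma sol_diff:
  assumes hq: "\<forall>z. En L C (PP *v z) \<le> q * En L C z" and q0: "0 \<le> q" and t: "t \<ge> 0"
  shows "En L C (sol a t - sol b t) \<le> q^(nat \<lfloor>t / T\<rfloor>) * En L C (a - b)"
proof -
  define k where "k = nat \<lfloor>t / T\<rfloor>"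
  have kb: "real k * T \<le> t" "t < real (Suc k) * T" using floor_bounds[OF t] unfolding k_def by auto
  let ?d = "(G^^k) a - (G^^k) b"
  have "En L C (sol a t - sol b t) \<le> En L C ?d"
  proof (cases "t \<le> real k * T + T/2")
    case True
    then have tt: "t \<in> {real k * T .. real k * T + T / 2}" using kb by auto
    have "En L C (sol a t - sol b t) = En L C (mexp ((t - real k * T) *\<^sub>R M1) *v ?d)"
      unfolding sol_p1[OF tt] F1_diff ..
    also have "\<dots> \<le> En L C ?d" by (rule energy.En_le[OF e1]) (use kb in simp)
    finally show ?thesis .
  next
    case False
    then have tt: "t \<in> {real k * T + T/2 .. real (Suc k) * T}" using kb by auto
    have "En L C (sol a t - sol b t) = En L C (mexp ((t - real k * T - T/2) *\<^sub>R M2) *v (mexp ((T/2) *\<^sub>R M1) *v ?d))"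
      unfolding sol_p2[OF tt] F2_diff F1_diff ..
    also have "\<dots> \<le> En L C (mexp ((T/2) *\<^sub>R M1) *v ?d)"
      by (rule energy.En_le[OF e2]) (use tt in simp)
    also have "\<dots> \<le> En L C ?d" by (rule energy.En_le[OF e1]) (use pos in simp)
    finally show ?thesis .
  qed
  also have "\<dots> \<le> q^k * En L C (a - b)" by (rule Gk_diff[OF hq q0])
  finally show ?thesis unfolding k_def .
qed

lemma filterlim_k: "filterlim (\<lambda>t. nat \<lfloor>t / T\<rfloor>) sequentially at_top"
proof -
  have "filterlim (\<lambda>t::real. (1/T) * t) at_top at_top"
    by (rule filterlim_tendsto_pos_mult_at_top[OF tendsto_const _ filterlim_ident]) (use pos in simp)
  then have "filterlim (\<lambda>t::real. t / T) at_top at_top" by (simp add: field_simps)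
  then show ?thesis
    by (rule filterlim_compose[OF filterlim_nat_sequentially filterlim_compose[OF filterlim_floor_sequentially]])
qed

lemma converge:
  assumes x: "is_solution R L C Vdc T x"
  shows "((\<lambda>t. x t - sol b t) \<longlongrightarrow> 0) at_top"
proof -
  obtain q where q0: "0 \<le> q" and q1: "q < 1" and hq: "\<forall>z. En L C (PP *v z) \<le> q * En L C z"
    using q_exists by blast
  define m where "m = min L C"
  have m: "m > 0" using pos by (simp add: m_def)
  define E0 where "E0 = En L C (x 0 - b)"
  define g where "g t = sqrt (q^(nat \<lfloor>t / T\<rfloor>) * E0 / m)" for t
  have "eventually (\<lambda>t. norm (x t - sol b t) \<le> g t) at_top"
    unfolding eventually_at_top_linorder
  proof (intro exI[of _ 0] allI impI)
    fix t :: real assume t: "t \<ge> 0"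
    have xt: "x t = sol (x 0) t" using sol_unique[OF x] t by blast
    have "m * (norm (x t - sol b t))^2 \<le> En L C (x t - sol b t)"
      unfolding m_def by (rule En_lower)
    also have "\<dots> \<le> q^(nat \<lfloor>t / T\<rfloor>) * E0"
      unfolding xt E0_def by (rule sol_diff[OF hq q0 t])
    finally have "(norm (x t - sol b t))^2 \<le> q^(nat \<lfloor>t / T\<rfloor>) * E0 / m"
      using m by (simp add: field_simps)
    then show "norm (x t - sol b t) \<le> g t" unfolding g_def by (rule real_le_rsqrt)
  qed
  moreover have "(g \<longlongrightarrow> 0) at_top"
  proof -
    have "((\<lambda>n. q^n) \<longlongrightarrow> 0) sequentially" using q0 q1 by (intro LIMSEQ_power_zero) simp
    then have "((\<lambda>t. q^(nat \<lfloor>t / T\<rfloor>)) \<longlongrightarrow> 0) at_top"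
      by (rule filterlim_compose[OF _ filterlim_k])
    then have "((\<lambda>t. q^(nat \<lfloor>t / T\<rfloor>) * E0) \<longlongrightarrow> 0 * E0) at_top"
      by (rule tendsto_mult[OF _ tendsto_const])
    then have "((\<lambda>t. q^(nat \<lfloor>t / T\<rfloor>) * E0 / m) \<longlongrightarrow> 0 * E0 / m) at_top"
      using m by (intro tendsto_divide tendsto_const) auto
    then have "((\<lambda>t. sqrt (q^(nat \<lfloor>t / T\<rfloor>) * E0 / m)) \<longlongrightarrow> sqrt (0 * E0 / m)) at_top"
      by (rule tendsto_real_sqrt)
    then show ?thesis unfolding g_def[abs_def] by simp
  qed
  ultimately show ?thesis by (rule Lim_null_comparison)
qed

definition "MM = mat 1 - mexp ((T / 2) *\<^sub>R M2) ** mexp ((T / 2) *\<^sub>R M1)"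
definition "xp0v = matrix_inv MM ** mexp ((T / 2) *\<^sub>R M2) ** matrix_inv M1
                   ** (mexp ((T / 2) *\<^sub>R M1) - mat 1) *v bb"

lemma MM_inv: "invertible MM"
proof -
  have "\<forall>x. MM *v x = 0 \<longrightarrow> x = 0"
  proof (intro allI impI)
    fix x assume "MM *v x = 0"
    then have "PP *v x = x" by (simp add: MM_def PP_def matrix_vector_mult_diff_rdistrib)
    then show "x = 0" using PP_strict[of x] by auto
  qed
  then show ?thesis
    by (simp add: invertible_left_inverse matrix_left_invertible_ker)
qed

lemma MM_props: "MM ** matrix_inv MM = mat 1" "matrix_inv MM ** MM = mat 1"
  using matrix_inv_props[OF MM_inv] by auto

lemma G_affine: "G a = PP *v a + G 0"
  using G_diff[of a 0] by (simp add: algebra_simps)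

lemma xp0v_eq: "xp0v = matrix_inv MM *v G 0"
  unfolding xp0v_def G_def F2_def F1_def
  by (simp add: matrix_mul_assoc matrix_vector_mul_assoc)

lemma MM_apply: "MM *v a = a - PP *v a"
  by (simp add: MM_def PP_def matrix_vector_mult_diff_rdistrib)

lemma G_fix_iff: "G a = a \<longleftrightarrow> a = xp0v"
proof -
  have "G a = a \<longleftrightarrow> MM *v a = G 0"
    by (subst G_affine) (auto simp: MM_apply algebra_simps)
  also have "\<dots> \<longleftrightarrow> a = matrix_inv MM *v G 0"
    by (metis MM_props matrix_vector_mul_assoc matrix_vector_mul_lid)
  finally show ?thesis by (simp add: xp0v_eq)
qed

lemma main:
  "invertible MM \<and>
    (\<exists>xp. is_solution R L C Vdc T xp \<and> (\<forall>t\<ge>0. xp (t + T) = xp t) \<and>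
       (\<forall>y. is_solution R L C Vdc T y \<and> (\<forall>t\<ge>0. y (t + T) = y t) \<longrightarrow> (\<forall>t\<ge>0. y t = xp t)) \<and>
       xp 0 = xp0v \<and>
       (\<forall>t\<in>{0..T/2}. xp t = mexp (t *\<^sub>R A1 R L C) *v xp 0
            + (matrix_inv (A1 R L C) ** (mexp (t *\<^sub>R A1 R L C) - mat 1)) *v b1 L Vdc) \<and>
       (\<forall>t\<in>{T/2<..T}. xp t = mexp ((t - T / 2) *\<^sub>R A2 R L C) *v xp (T / 2)) \<and>
       (\<forall>x0. \<exists>x. is_solution R L C Vdc T x \<and> x 0 = x0) \<and>
       (\<forall>x. is_solution R L C Vdc T x \<longrightarrow> ((\<lambda>t. x t - xp t) \<longlongrightarrow> 0) at_top))"
proof (intro conjI exI[of _ "sol xp0v"])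
  show "invertible MM" by (rule MM_inv)
  show "is_solution R L C Vdc T (sol xp0v)" by (rule sol_solution)
  have Gx: "G xp0v = xp0v" by (simp add: G_fix_iff)
  show "\<forall>t\<ge>0. sol xp0v (t + T) = sol xp0v t" using sol_shift Gx by simp
  show "\<forall>y. is_solution R L C Vdc T y \<and> (\<forall>t\<ge>0. y (t + T) = y t) \<longrightarrow> (\<forall>t\<ge>0. y t = sol xp0v t)"
  proof (intro allI impI)
    fix y :: "real \<Rightarrow> real^2" and t :: real
    assume y: "is_solution R L C Vdc T y \<and> (\<forall>t\<ge>0. y (t + T) = y t)" and t: "t \<ge> 0"
    have u: "\<forall>t\<ge>0. y t = sol (y 0) t" using sol_unique y by blast
    have "y (0 + T) = y 0" using y[THEN conjunct2, rule_format, of 0, OF order_refl] .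
    then have "y 0 = y (0 + T)" by (rule sym)
    also have "\<dots> = sol (y 0) (0 + T)" using pos by (intro u[rule_format]) simp
    also have "\<dots> = G (y 0)" using sol_shift[of 0 "y 0"] by (simp add: sol_0)
    finally have "y 0 = xp0v" using G_fix_iff by metis
    moreover have "y t = sol (y 0) t" using u t by blast
    ultimately show "y t = sol xp0v t" by simp
  qed
  show "sol xp0v 0 = xp0v" by (rule sol_0)
  show "\<forall>t\<in>{0..T/2}. sol xp0v t = mexp (t *\<^sub>R A1 R L C) *v sol xp0v 0
            + (matrix_inv (A1 R L C) ** (mexp (t *\<^sub>R A1 R L C) - mat 1)) *v b1 L Vdc"
    using sol_p1[of _ 0 xp0v] by (simp add: sol_0 F1_def)
  show "\<forall>t\<in>{T/2<..T}. sol xp0v t = mexp ((t - T / 2) *\<^sub>R A2 R L C) *v sol xp0v (T / 2)"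
  proof
    fix t assume t: "t \<in> {T/2<..T}"
    have "sol xp0v (T/2) = F1 (T/2) xp0v" using sol_p1[of "T/2" 0 xp0v] pos by simp
    moreover have "sol xp0v t = F2 (t - T/2) (F1 (T/2) xp0v)" using sol_p2[of t 0 xp0v] t by simp
    ultimately show "sol xp0v t = mexp ((t - T / 2) *\<^sub>R A2 R L C) *v sol xp0v (T / 2)"
      by (simp add: F2_def)
  qed
  show "\<forall>x0. \<exists>x. is_solution R L C Vdc T x \<and> x 0 = x0"
    using sol_solution sol_0 by blast
  show "\<forall>x. is_solution R L C Vdc T x \<longrightarrow> ((\<lambda>t. x t - sol xp0v t) \<longlongrightarrow> 0) at_top"
    using converge by blast
qed

end

theorem theorem1:
  fixes R L C Vdc T :: real
  assumes "R > 0" "L > 0" "C > 0" "Vdc > 0" "T > 0"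
  defines "M \<equiv> mat 1 - mexp ((T / 2) *\<^sub>R A2 R L C) ** mexp ((T / 2) *\<^sub>R A1 R L C)"
  defines "xp0 \<equiv> matrix_inv M ** mexp ((T / 2) *\<^sub>R A2 R L C) ** matrix_inv (A1 R L C)
                   ** (mexp ((T / 2) *\<^sub>R A1 R L C) - mat 1) *v b1 L Vdc"
  shows "invertible M \<and>
    (\<exists>xp. is_solution R L C Vdc T xp \<and> (\<forall>t\<ge>0. xp (t + T) = xp t) \<and>
       (\<forall>y. is_solution R L C Vdc T y \<and> (\<forall>t\<ge>0. y (t + T) = y t) \<longrightarrow> (\<forall>t\<ge>0. y t = xp t)) \<and>
       xp 0 = xp0 \<and>
       (\<forall>t\<in>{0..T/2}. xp t = mexp (t *\<^sub>R A1 R L C) *v xp 0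
            + (matrix_inv (A1 R L C) ** (mexp (t *\<^sub>R A1 R L C) - mat 1)) *v b1 L Vdc) \<and>
       (\<forall>t\<in>{T/2<..T}. xp t = mexp ((t - T / 2) *\<^sub>R A2 R L C) *v xp (T / 2)) \<and>
       (\<forall>x0. \<exists>x. is_solution R L C Vdc T x \<and> x 0 = x0) \<and>
       (\<forall>x. is_solution R L C Vdc T x \<longrightarrow> ((\<lambda>t. x t - xp t) \<longlongrightarrow> 0) at_top))"
proof -
  interpret sys R L C Vdc T by unfold_locales (use assms in auto)
  have "M = MM" unfolding M_def MM_def ..
  moreover have "xp0 = xp0v" unfolding xp0_def xp0v_def M_def MM_def ..
  ultimately show ?thesis using main by simp
qed

end
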